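(* Let $X$ be a compact metric space and $f_{1,\infty}=\{f_n\}$ an equicontinuous sequence of continuous maps $f_n:X\to X$, and let $\mu_{1,\infty}=\{\mu_n\}$ be a sequence of Borel probability measures with $f_n\mu_n=\mu_{n+1}$ for all $n$. Assume that the measures in the weak$^*$-closure of $\{\mu_n\}$ are pairwise equivalent (mutually absolutely continuous). Then the Misiurewicz class $\mathcal{E}_{\mathrm{M}}$ contains every constant sequence $\mathcal{P}_n\equiv\mathcal{P}$ where $\mathcal{P}=\{P_1,\dots,P_k\}$ is a finite Borel partition of $X$ whose members have zero boundaries with respect to the measures $\mu_n$, i.e., $\mu_n(\partial P_i)=0$.
   Context: Equicontinuity: for every $\varepsilon>0$ there is $\delta>0$ with $\varrho(f_nx,f_ny)<\varepsilon$ whenever $\varrho(x,y)<\delta$, for all $n$. Misiurewicz class $\mathcal{E}_{\mathrm{M}}$ (for the system with $X_n=X$ and measures $\mu_n$): the set of sequences $\{\mathcal{P}_n\}$ of finite Borel partitions $\mathcal{P}_n=\{P_{n,1},\dots,P_{n,k_n}\}$ of $X$ with $\sup_nk_n<\infty$ such that for every $\varepsilon>0$ there exist $\delta>0$ and compact sets $C_{n,i}\subset P_{n,i}$ with, for all $n$: (a) $\mu_n(P_{n,i}\setminus C_{n,i})\le\varepsilon$; (b) $\varrho(x,y)\ge\delta$ for all $x\in C_{n,i}$, $y\in C_{n,j}$, $i\neq j$. *)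

theory Defs
  imports "HOL-Probability.Probability"
begin

definition equicontinuous_seq :: "(nat \<Rightarrow> 'a::metric_space \<Rightarrow> 'a) \<Rightarrow> bool" where
  "equicontinuous_seq f \<longleftrightarrow>
     (\<forall>\<epsilon>>0. \<exists>\<delta>>0. \<forall>n x y. dist x y < \<delta> \<longrightarrow> dist (f n x) (f n y) < \<epsilon>)"

definition borel_prob :: "'a::topological_space measure \<Rightarrow> bool" where
  "borel_prob M \<longleftrightarrow> sets M = sets borel \<and> prob_space M"

text \<open>Weak-star closure of the set of measures mu n, n in nat, inside the space of
  Borel probability measures: nu lies in it iff every basic weak-star neighbourhood
  of nu (given by finitely many continuous functions and a tolerance) meets the set.\<close>
definition weak_star_closure :: "(nat \<Rightarrow> 'a::metric_space measure) \<Rightarrow> 'a measure set" where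
  "weak_star_closure \<mu> = {\<nu>. borel_prob \<nu> \<and>
     (\<forall>G \<epsilon>. finite G \<and> (\<forall>g\<in>G. continuous_on UNIV g) \<and> \<epsilon> > 0 \<longrightarrow>
        (\<exists>n. \<forall>g\<in>G. \<bar>(\<integral>x. g x \<partial>\<mu> n) - (\<integral>x. g x \<partial>\<nu>)\<bar> < (\<epsilon>::real)))}"

definition borel_partition :: "nat \<Rightarrow> (nat \<Rightarrow> 'a::topological_space set) \<Rightarrow> bool" where
  "borel_partition k P \<longleftrightarrow>
     (\<forall>i<k. P i \<in> sets borel) \<and>
     (\<forall>i<k. \<forall>j<k. i \<noteq> j \<longrightarrow> P i \<inter> P j = {}) \<and>
     (\<Union>i<k. P i) = UNIV"

text \<open>Misiurewicz class: sequences n \<mapsto> P n of finite Borel partitions, P n having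
  k n members P n 0, ..., P n (k n - 1).\<close>
definition misiurewicz_class ::
  "(nat \<Rightarrow> 'a::metric_space measure) \<Rightarrow> ((nat \<Rightarrow> nat) \<times> (nat \<Rightarrow> nat \<Rightarrow> 'a set)) set" where
  "misiurewicz_class \<mu> = {(k, P).
     (\<forall>n. borel_partition (k n) (P n)) \<and> bdd_above (range k) \<and>
     (\<forall>\<epsilon>>0. \<exists>\<delta>>0. \<exists>C. \<forall>n. \<forall>i<k n.
        compact (C n i) \<and> C n i \<subseteq> P n i \<and>
        measure (\<mu> n) (P n i - C n i) \<le> \<epsilon> \<and>
        (\<forall>j<k n. i \<noteq> j \<longrightarrow> (\<forall>x\<in>C n i. \<forall>y\<in>C n j. dist x y \<ge> \<delta>)))}"

end

theory Submission
  imports Defs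
begin

lemma cantor_sep:
  fixes d :: "nat \<Rightarrow> real"
  assumes bd: "\<And>q. \<bar>d q\<bar> \<le> 1" and z: "\<And>q. q < p \<Longrightarrow> d q = 0" and one: "\<bar>d p\<bar> = 1"
  shows "\<bar>\<Sum>q. 2 * d q / 3 ^ Suc q\<bar> \<ge> 1 / 3 ^ Suc p"
proof -
  define f where "f q = 2 * d q / 3 ^ Suc q" for q
  have geo: "summable (\<lambda>q. 2 * (1/3::real) ^ q)"
    by (intro summable_mult summable_geometric) auto
  have nf: "norm (f q) \<le> 2 * (1/3) ^ q" for q
    using bd[of q] by (auto simp: f_def abs_mult power_divide field_simps)
  have sf: "summable f"
    by (rule summable_comparison_test[OF _ geo]) (use nf in auto)
  have split: "suminf f = (\<Sum>q. f (q + Suc p)) + (\<Sum>i<Suc p. f i)"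
    by (rule suminf_split_initial_segment[OF sf])
  have init: "(\<Sum>i<Suc p. f i) = f p"
    using z by (simp add: f_def)
  have fp: "\<bar>f p\<bar> = 2 / 3 ^ Suc p" using one by (simp add: f_def abs_mult)
  have tn: "norm (f (q + Suc p)) \<le> (2 / 3 ^ (p+2)) * (1/3) ^ q" for q
    using bd[of "q + Suc p"] by (auto simp: f_def abs_mult power_add power_divide field_simps)
  have sg2: "summable (\<lambda>q. (2 / 3 ^ (p+2)) * (1/3::real) ^ q)"
    by (intro summable_mult summable_geometric) auto
  have snt: "summable (\<lambda>q. norm (f (q + Suc p)))"
    by (rule summable_comparison_test[OF _ sg2]) (use tn in auto)
  have "\<bar>\<Sum>q. f (q + Suc p)\<bar> \<le> (\<Sum>q. norm (f (q + Suc p)))"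
    using summable_norm[OF snt] by simp
  also have "\<dots> \<le> (\<Sum>q. (2 / 3 ^ (p+2)) * (1/3::real) ^ q)"
    by (rule suminf_le[OF tn snt sg2])
  also have "\<dots> = (2 / 3 ^ (p+2)) * (3/2)"
    by (subst suminf_mult) (simp_all add: suminf_geometric)
  also have "\<dots> = 1 / 3 ^ Suc p" by simp
  finally have t: "\<bar>\<Sum>q. f (q + Suc p)\<bar> \<le> 1 / 3 ^ Suc p" .
  have "\<bar>suminf f\<bar> \<ge> \<bar>f p\<bar> - \<bar>\<Sum>q. f (q + Suc p)\<bar>"
    using split init by linarith
  then show ?thesis using t fp unfolding f_def by simp
qed


lemma nets:
  assumes "compact (UNIV :: 'a::metric_space set)"
  shows "\<exists>qs :: nat \<Rightarrow> 'a list. \<forall>m x. \<exists>j<length (qs m). dist x (qs m ! j) < 1 / (real m + 1)"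
proof -
  have "\<exists>xs :: 'a list. \<forall>x. \<exists>j<length xs. dist x (xs ! j) < 1 / (real m + 1)" for m
  proof -
    have cv: "(UNIV :: 'a set) \<subseteq> (\<Union>c\<in>UNIV. ball c (1 / (real m + 1)))" by auto
    have "\<exists>C' :: 'a set. C' \<subseteq> UNIV \<and> finite C' \<and> UNIV \<subseteq> (\<Union>c\<in>C'. ball c (1 / (real m + 1)))"
      by (rule compactE_image[OF assms, of UNIV "\<lambda>c. ball c (1 / (real m + 1))", OF open_ball cv])
         (intro exI conjI; assumption)
    then obtain C' :: "'a set" where "finite C'" and cov: "UNIV \<subseteq> (\<Union>c\<in>C'. ball c (1 / (real m + 1)))"
      by blast
    moreover obtain xs where xs: "set xs = C'" using finite_list[OF \<open>finite C'\<close>] by blast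
    show ?thesis
    proof (intro exI[of _ xs] allI)
      fix x
      obtain c where "c \<in> C'" "x \<in> ball c (1 / (real m + 1))"
        using cov by blast
      then obtain j where "j < length xs" "xs ! j = c" using xs by (auto simp: in_set_conv_nth)
      then show "\<exists>j<length xs. dist x (xs ! j) < 1 / (real m + 1)"
        using \<open>x \<in> ball c _\<close> by (auto simp: dist_commute)
    qed
  qed
  then have "\<forall>m. \<exists>xs :: 'a list. \<forall>x. \<exists>j<length xs. dist x (xs ! j) < 1 / (real m + 1)" by blast
  then show ?thesis by (rule choice)
qed

definition Fb :: "(nat \<Rightarrow> 'a::metric_space list) \<Rightarrow> nat \<Rightarrow> 'a set" where
  "Fb qs p = (case prod_decode p of (m, j) \<Rightarrow>
     if j < length (qs m) then cball (qs m ! j) (1 / (real m + 1)) else {})"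

definition enc :: "(nat \<Rightarrow> 'a::metric_space list) \<Rightarrow> 'a \<Rightarrow> real" where
  "enc qs x = (\<Sum>p. 2 * indicator (Fb qs p) x / 3 ^ Suc p)"

lemma closed_Fb: "closed (Fb qs p)"
  by (auto simp: Fb_def split: prod.splits)

lemma summable_enc_terms:
  fixes b :: "nat \<Rightarrow> real"
  assumes "\<And>q. \<bar>b q\<bar> \<le> 1"
  shows "summable (\<lambda>q. 2 * b q / 3 ^ Suc q)"
proof -
  have geo: "summable (\<lambda>q. 2 * (1/3::real) ^ q)"
    by (intro summable_mult summable_geometric) auto
  have "norm (2 * b q / 3 ^ Suc q) \<le> 2 * (1/3::real) ^ q" for q
  proof -
    have "norm (2 * b q / 3 ^ Suc q) = 2 * \<bar>b q\<bar> / 3 ^ Suc q" by (simp add: abs_mult)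
    also have "\<dots> \<le> 2 * 1 / 3 ^ Suc q" using assms[of q] by (intro divide_right_mono) auto
    also have "\<dots> \<le> 2 * (1/3) ^ q" by (simp add: power_divide field_simps)
    finally show ?thesis .
  qed
  then show ?thesis
    by (intro summable_comparison_test[OF _ geo]) auto
qed

lemma summable_enc: "summable (\<lambda>p. 2 * indicator (Fb qs p) x / 3 ^ Suc p :: real)"
  by (rule summable_enc_terms) (auto simp: indicator_def)

lemma enc_measurable: "enc qs \<in> borel_measurable borel"
  unfolding enc_def
  by (intro borel_measurable_suminf borel_measurable_divide borel_measurable_times
      borel_measurable_const borel_measurable_indicator borel_closed closed_Fb)

lemma enc_bounds: "0 \<le> enc qs x \<and> enc qs x \<le> 1"
proof
  show "0 \<le> enc qs x" unfolding enc_def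
    by (intro suminf_nonneg summable_enc) auto
  have sg: "summable (\<lambda>p. 2 * 1 / 3 ^ Suc p :: real)"
    by (rule summable_enc_terms) auto
  have "enc qs x \<le> (\<Sum>p. 2 * 1 / 3 ^ Suc p :: real)" unfolding enc_def
    by (intro suminf_le summable_enc sg) (auto simp: indicator_def)
  also have "(\<Sum>p. 2 * 1 / 3 ^ Suc p :: real) = (\<Sum>p. (2/3) * (1/3) ^ p)"
    by (simp add: power_divide field_simps)
  also have "\<dots> = 1"
    by (subst suminf_mult) (simp_all add: suminf_geometric)
  finally show "enc qs x \<le> 1" .
qed

lemma enc_unif:
  fixes qs :: "nat \<Rightarrow> 'a::metric_space list"
  assumes cover: "\<And>m x. \<exists>j<length (qs m). dist x (qs m ! j) < 1 / (real m + 1)"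
    and "\<epsilon> > 0"
  shows "\<exists>\<eta>>0. \<forall>x y. \<bar>enc qs x - enc qs y\<bar> < \<eta> \<longrightarrow> dist x y < \<epsilon>"
proof -
  obtain m :: nat where m: "1 / (real m + 1) < \<epsilon> / 2"
    using reals_Archimedean[of "\<epsilon>/2"] \<open>\<epsilon> > 0\<close>
    by (metis add.commute half_gt_zero inverse_eq_divide of_nat_Suc)
  have "finite ((\<lambda>j. prod_encode (m, j)) ` {..<length (qs m)})" by simp
  then obtain P where P: "\<And>j. j < length (qs m) \<Longrightarrow> prod_encode (m, j) < P"
    by (metis finite_nat_bounded imageI lessThan_iff subsetD)
  show ?thesis
  proof (intro exI[of _ "1 / 3 ^ P"] conjI allI impI)
    show "(0::real) < 1 / 3 ^ P" by simp
    fix x y assume xy: "\<bar>enc qs x - enc qs y\<bar> < 1 / 3 ^ P"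
    define d where "d q = indicator (Fb qs q) x - (indicator (Fb qs q) y :: real)" for q
    have agree: "\<forall>p<P. d p = 0"
    proof (rule ccontr)
      assume "\<not> (\<forall>p<P. d p = 0)"
      then obtain p0 where p0: "p0 < P" "d p0 \<noteq> 0" by auto
      define p where "p = (LEAST p. d p \<noteq> 0)"
      have dp: "d p \<noteq> 0" unfolding p_def by (rule LeastI[of _ p0]) (use p0 in auto)
      have pp0: "p \<le> p0" unfolding p_def by (rule Least_le) (use p0 in auto)
      have zl: "\<And>q. q < p \<Longrightarrow> d q = 0" unfolding p_def using not_less_Least by blast
      have bd: "\<bar>d q\<bar> \<le> 1" for q by (auto simp: d_def indicator_def)
      have one: "\<bar>d p\<bar> = 1" using dp by (auto simp: d_def indicator_def split: if_splits)
      have "enc qs x - enc qs y = (\<Sum>q. 2 * d q / 3 ^ Suc q)"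
        unfolding enc_def d_def
        by (subst suminf_diff[OF summable_enc summable_enc])
           (simp add: right_diff_distrib diff_divide_distrib)
      moreover have "\<bar>\<Sum>q. 2 * d q / 3 ^ Suc q\<bar> \<ge> 1 / 3 ^ Suc p"
        by (rule cantor_sep) (use bd zl one in auto)
      ultimately have "\<bar>enc qs x - enc qs y\<bar> \<ge> 1 / 3 ^ Suc p" by simp
      moreover have "(1::real) / 3 ^ P \<le> 1 / 3 ^ Suc p"
        using pp0 p0 by (intro divide_left_mono power_increasing) auto
      ultimately show False using xy by linarith
    qed
    obtain j where j: "j < length (qs m)" "dist x (qs m ! j) < 1 / (real m + 1)"
      using cover by blast
    have "x \<in> Fb qs (prod_encode (m, j))" using j by (auto simp: Fb_def dist_commute)
    moreover have "d (prod_encode (m, j)) = 0" using agree P[OF j(1)] by blast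
    ultimately have "y \<in> Fb qs (prod_encode (m, j))"
      by (auto simp: d_def indicator_def split: if_splits)
    then have "dist y (qs m ! j) \<le> 1 / (real m + 1)" using j by (auto simp: Fb_def dist_commute)
    moreover have "(2::real) / (real m + 1) = 1 / (real m + 1) + 1 / (real m + 1)" by (simp add: field_simps)
    ultimately have "dist x y < 2 / (real m + 1)"
      using j(2) dist_triangle3[of x y "qs m ! j"] dist_commute[of x "qs m ! j"] dist_commute[of y "qs m ! j"] by linarith
    then show "dist x y < \<epsilon>" using m by linarith
  qed
qed


lemma inverse_map:
  fixes e :: "'a::metric_space \<Rightarrow> real"
  assumes cpt: "compact (UNIV :: 'a set)"
    and bnd: "\<And>x. 0 \<le> e x \<and> e x \<le> 1"
    and unif: "\<And>\<epsilon>. \<epsilon> > 0 \<Longrightarrow> \<exists>\<eta>>0. \<forall>x y. \<bar>e x - e y\<bar> < \<eta> \<longrightarrow> dist x y < \<epsilon>"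
  shows "\<exists>K (\<psi> :: real \<Rightarrow> 'a). compact K \<and> range e \<subseteq> K \<and> continuous_on K \<psi> \<and> (\<forall>x. \<psi> (e x) = x)"
proof -
  define Gr where "Gr = closure (range (\<lambda>y. (e y, y)))"
  have sub: "range (\<lambda>y. (e y, y)) \<subseteq> {0..1} \<times> (UNIV :: 'a set)" using bnd by auto
  have "Gr \<subseteq> {0..1} \<times> (UNIV :: 'a set)"
    unfolding Gr_def by (rule closure_minimal[OF sub]) (auto intro: closed_Times)
  moreover have "compact ({0..1::real} \<times> (UNIV :: 'a set))"
    by (intro compact_Times cpt) auto
  ultimately have cGr: "compact Gr"
    by (metis Gr_def closed_closure compact_Int_closed inf.absorb_iff2)
  define K where "K = fst ` Gr"
  have cK: "compact K" unfolding K_def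
    by (intro compact_continuous_image continuous_intros cGr)
  have key: "\<exists>\<eta>>0. \<forall>a\<in>Gr. \<forall>b\<in>Gr. \<bar>fst a - fst b\<bar> < \<eta> \<longrightarrow> dist (snd a) (snd b) < \<epsilon>"
    if "\<epsilon> > 0" for \<epsilon>
  proof -
    obtain \<eta>0 where \<eta>0: "\<eta>0 > 0" "\<And>x y. \<bar>e x - e y\<bar> < \<eta>0 \<Longrightarrow> dist x y < \<epsilon>/3"
      using unif[of "\<epsilon>/3"] \<open>\<epsilon> > 0\<close> by auto
    show ?thesis
    proof (intro exI[of _ "\<eta>0/3"] conjI ballI impI)
      show "\<eta>0/3 > 0" using \<eta>0 by simp
      fix a b assume a: "a \<in> Gr" and b: "b \<in> Gr" and ab: "\<bar>fst a - fst b\<bar> < \<eta>0/3"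
      have r: "min (\<eta>0/3) (\<epsilon>/3) > 0" using \<eta>0 \<open>\<epsilon> > 0\<close> by simp
      obtain p where p: "p \<in> range (\<lambda>y. (e y, y))" "dist p a < min (\<eta>0/3) (\<epsilon>/3)"
        using a r unfolding Gr_def closure_approachable by blast
      obtain q where q: "q \<in> range (\<lambda>y. (e y, y))" "dist q b < min (\<eta>0/3) (\<epsilon>/3)"
        using b r unfolding Gr_def closure_approachable by blast
      obtain y where y: "p = (e y, y)" using p by auto
      obtain y' where y': "q = (e y', y')" using q by auto
      have d1: "\<bar>e y - fst a\<bar> < \<eta>0/3" "dist y (snd a) < \<epsilon>/3"
        using dist_fst_le[of p a] dist_snd_le[of p a] p(2) y by (auto simp: dist_real_def)
      have d2: "\<bar>e y' - fst b\<bar> < \<eta>0/3" "dist y' (snd b) < \<epsilon>/3"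
        using dist_fst_le[of q b] dist_snd_le[of q b] q(2) y' by (auto simp: dist_real_def)
      have "\<bar>e y - e y'\<bar> < \<eta>0" using d1(1) d2(1) ab by linarith
      then have "dist y y' < \<epsilon>/3" using \<eta>0 by blast
      then show "dist (snd a) (snd b) < \<epsilon>"
        using d1(2) d2(2) dist_triangle[of "snd a" "snd b" y] dist_triangle[of y "snd b" y']
          dist_commute[of y "snd a"] by linarith
    qed
  qed
  define \<psi> where "\<psi> t = (SOME x. (t, x) \<in> Gr)" for t
  have psiK: "(t, \<psi> t) \<in> Gr" if tK: "t \<in> K" for t
  proof -
    obtain x where "(t, x) \<in> Gr" using tK unfolding K_def by force
    then show ?thesis unfolding \<psi>_def by (rule someI)
  qed
  have uniq: "x = x'" if "(t, x) \<in> Gr" "(t, x') \<in> Gr" for t x x'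
  proof (rule ccontr)
    assume "x \<noteq> x'"
    then have "dist x x' > 0" by simp
    from key[OF this] obtain \<eta> where "\<eta> > 0" "\<forall>a\<in>Gr. \<forall>b\<in>Gr. \<bar>fst a - fst b\<bar> < \<eta> \<longrightarrow> dist (snd a) (snd b) < dist x x'"
      by blast
    then show False using that by force
  qed
  have GrI: "(e y, y) \<in> Gr" for y unfolding Gr_def by (intro closure_subset[THEN subsetD]) auto
  have rK: "range e \<subseteq> K" unfolding K_def
  proof
    fix t assume "t \<in> range e"
    then obtain y where "t = e y" by auto
    then show "t \<in> fst ` Gr" using GrI[of y] by (metis fst_conv image_eqI)
  qed
  have inv: "\<psi> (e x) = x" for x
    using uniq[OF psiK GrI] rK by auto
  have cont: "continuous_on K \<psi>"
    unfolding continuous_on_iff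
  proof (intro ballI allI impI)
    fix t and \<epsilon> :: real assume t: "t \<in> K" and "\<epsilon> > 0"
    from key[OF this(2)] obtain \<eta> where \<eta>: "\<eta> > 0" "\<forall>a\<in>Gr. \<forall>b\<in>Gr. \<bar>fst a - fst b\<bar> < \<eta> \<longrightarrow> dist (snd a) (snd b) < \<epsilon>"
      by blast
    show "\<exists>d>0. \<forall>x'\<in>K. dist x' t < d \<longrightarrow> dist (\<psi> x') (\<psi> t) < \<epsilon>"
    proof (intro exI[of _ \<eta>] conjI ballI impI)
      fix t' assume "t' \<in> K" "dist t' t < \<eta>"
      then show "dist (\<psi> t') (\<psi> t) < \<epsilon>"
        using \<eta>(2) psiK[OF \<open>t' \<in> K\<close>] psiK[OF t] by (force simp: dist_real_def)
    qed (use \<eta> in auto)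
  qed
  show ?thesis using cK rK cont inv by blast
qed


lemma meas_borel: "sets M = sets borel \<Longrightarrow> f \<in> measurable borel N \<Longrightarrow> f \<in> measurable M N"
  using measurable_cong_sets[of M borel N N] by simp

lemma bdd_cont:
  fixes g :: "'a::metric_space \<Rightarrow> real"
  assumes "compact (UNIV :: 'a set)" "continuous_on UNIV g"
  shows "\<exists>B\<ge>0. \<forall>x. \<bar>g x\<bar> \<le> B"
proof -
  have "compact (range g)" by (rule compact_continuous_image[OF assms(2,1)])
  then have "bounded (range g)" by (rule compact_imp_bounded)
  then obtain B where B: "\<forall>y\<in>range g. norm y \<le> B" unfolding bounded_iff by blast
  have "\<bar>g x\<bar> \<le> \<bar>B\<bar>" for x using bspec[OF B rangeI[of g x]] by simp
  then show ?thesis by (intro exI[of _ "\<bar>B\<bar>"]) simp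
qed

lemma borel_prob_integrable:
  fixes g :: "'a::metric_space \<Rightarrow> real"
  assumes "borel_prob M" "compact (UNIV :: 'a set)" "continuous_on UNIV g"
  shows "integrable M g"
proof -
  interpret prob_space M using assms(1) by (simp add: borel_prob_def)
  obtain B where "\<forall>x. \<bar>g x\<bar> \<le> B" using bdd_cont[OF assms(2,3)] by blast
  moreover have "g \<in> borel_measurable M"
    using assms(1) by (intro meas_borel[OF _ borel_measurable_continuous_onI[OF assms(3)]]) (simp add: borel_prob_def)
  ultimately show ?thesis by (intro integrable_const_bound[where B=B]) auto
qed

lemma weak_limit:
  fixes \<mu>s :: "nat \<Rightarrow> 'a::metric_space measure"
  assumes cpt: "compact (UNIV :: 'a set)" and bp: "\<And>n. borel_prob (\<mu>s n)"
  shows "\<exists>\<nu> r. borel_prob \<nu> \<and> strict_mono r \<and>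
    (\<forall>g::'a \<Rightarrow> real. continuous_on UNIV g \<longrightarrow> (\<lambda>i. \<integral>x. g x \<partial>\<mu>s (r i)) \<longlonglongrightarrow> (\<integral>x. g x \<partial>\<nu>))"
proof -
  have sM: "sets (\<mu>s n) = sets borel" for n using bp by (simp add: borel_prob_def)
  have pM: "prob_space (\<mu>s n)" for n using bp by (simp add: borel_prob_def)
  obtain qs :: "nat \<Rightarrow> 'a list" where qs: "\<forall>m x. \<exists>j<length (qs m). dist x (qs m ! j) < 1 / (real m + 1)"
    using nets[OF cpt] by blast
  define e where "e = enc qs"
  have bnd: "0 \<le> e x \<and> e x \<le> 1" for x unfolding e_def by (rule enc_bounds)
  have unif: "\<exists>\<eta>>0. \<forall>x y. \<bar>e x - e y\<bar> < \<eta> \<longrightarrow> dist x y < \<epsilon>" if "\<epsilon> > 0" for \<epsilon>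
    unfolding e_def using qs that by (intro enc_unif) auto
  obtain K and \<psi> :: "real \<Rightarrow> 'a" where K: "compact K" "range e \<subseteq> K" "continuous_on K \<psi>" "\<And>x. \<psi> (e x) = x"
    using inverse_map[OF cpt bnd unif] by blast
  have eB: "e \<in> borel_measurable borel" unfolding e_def by (rule enc_measurable)
  have eM: "e \<in> borel_measurable (\<mu>s n)" for n by (rule meas_borel[OF sM eB])
  define lam where "lam n = distr (\<mu>s n) borel e" for n
  have rd: "real_distribution (lam n)" for n
  proof -
    interpret prob_space "\<mu>s n" by (rule pM)
    show ?thesis unfolding lam_def
      by (intro real_distribution.intro prob_space_distr eM real_distribution_axioms.intro) simp
  qed
  have tight: "tight lam"
    unfolding tight_def
  proof (intro conjI allI impI rd)
    fix \<epsilon> :: real assume "\<epsilon> > 0"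
    have "measure (lam n) {-1<..2} = 1" for n
    proof -
      interpret prob_space "\<mu>s n" by (rule pM)
      have "e x \<in> {-1<..2}" for x using bnd[of x] by auto
      then have "e -` {-1<..2} \<inter> space (\<mu>s n) = space (\<mu>s n)" by auto
      then show ?thesis unfolding lam_def by (subst measure_distr[OF eM]) (simp_all add: prob_space)
    qed
    then show "\<exists>a b::real. a < b \<and> (\<forall>n. measure (lam n) {a<..b} > 1 - \<epsilon>)"
      using \<open>\<epsilon> > 0\<close> by (intro exI[of _ "-1"] exI[of _ 2]) auto
  qed
  obtain r M where r: "strict_mono (r :: nat \<Rightarrow> nat)" and M: "real_distribution M"
    and wc: "weak_conv_m (lam \<circ> id \<circ> r) M"
    using tight_imp_convergent_subsubsequence[OF tight, of id] by (auto simp: strict_mono_def)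
  interpret M: real_distribution M by (rule M)
  have rd': "\<And>n. real_distribution ((lam \<circ> id \<circ> r) n)" using rd by simp
  have conv: "(\<lambda>i. \<integral>x. h (e x) \<partial>\<mu>s (r i)) \<longlonglongrightarrow> (\<integral>t. h t \<partial>M)"
    if hc: "continuous_on UNIV h" and hb: "\<And>t. norm (h t) \<le> B" for h :: "real \<Rightarrow> real" and B
  proof -
    have "(\<lambda>i. integral\<^sup>L ((lam \<circ> id \<circ> r) i) h) \<longlonglongrightarrow> integral\<^sup>L M h"
      by (rule weak_conv_imp_integral_bdd_continuous_conv[OF rd' M wc])
         (use hc hb in \<open>auto simp: continuous_on_eq_continuous_at\<close>)
    moreover have "integral\<^sup>L ((lam \<circ> id \<circ> r) i) h = (\<integral>x. h (e x) \<partial>\<mu>s (r i))" for i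
      unfolding lam_def by (simp add: integral_distr[OF eM] borel_measurable_continuous_onI[OF hc])
    ultimately show ?thesis by simp
  qed
  have Kne: "K \<noteq> {}" using K(2) by auto
  have cK: "closed K" using K(1) by (rule compact_imp_closed)
  \<comment> \<open>M is concentrated on K\<close>
  define h0 where "h0 t = max 0 (1 - infdist t K)" for t
  have h0c: "continuous_on UNIV h0" unfolding h0_def by (intro continuous_intros)
  have h0b: "norm (h0 t) \<le> 1" for t unfolding h0_def using infdist_nonneg[of t K] by auto
  have "(\<lambda>i. \<integral>x. h0 (e x) \<partial>\<mu>s (r i)) \<longlonglongrightarrow> (\<integral>t. h0 t \<partial>M)" by (rule conv[OF h0c h0b])
  moreover have "(\<integral>x. h0 (e x) \<partial>\<mu>s (r i)) = 1" for i
  proof -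
    interpret prob_space "\<mu>s (r i)" by (rule pM)
    have "h0 (e x) = 1" for x
    proof -
      have "e x \<in> K" using K(2) by auto
      then have "infdist (e x) K = 0" by (rule infdist_zero)
      then show ?thesis by (simp add: h0_def)
    qed
    then show ?thesis by (simp add: prob_space)
  qed
  ultimately have "(\<lambda>i::nat. 1::real) \<longlonglongrightarrow> (\<integral>t. h0 t \<partial>M)" by simp
  then have int1: "(\<integral>t. h0 t \<partial>M) = 1" using LIMSEQ_unique[OF _ tendsto_const] by metis
  have h0M: "h0 \<in> borel_measurable M" using borel_measurable_continuous_onI[OF h0c] by simp
  have h0int: "integrable M h0"
    by (rule M.integrable_const_bound[where B=1]) (use h0b h0M in auto)
  have "(\<integral>t. 1 - h0 t \<partial>M) = (\<integral>t. 1 \<partial>M) - (\<integral>t. h0 t \<partial>M)"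
    by (rule Bochner_Integration.integral_diff[OF M.integrable_const h0int])
  also have "\<dots> = 0" using int1 M.prob_space by simp
  finally have i0: "(\<integral>t. 1 - h0 t \<partial>M) = 0" .
  have int2: "integrable M (\<lambda>t. 1 - h0 t)" by (rule Bochner_Integration.integrable_diff[OF M.integrable_const h0int])
  have nn: "AE t in M. 0 \<le> 1 - h0 t" using h0b by (intro AE_I2) (auto simp: abs_le_iff)
  have ae0: "AE t in M. 1 - h0 t = 0" using integral_nonneg_eq_0_iff_AE[OF int2 nn] i0 by simp
  have aeK: "AE t in M. t \<in> K"
    using ae0
  proof (rule AE_mp, intro AE_I2 impI)
    fix t assume "1 - h0 t = 0"
    then have "infdist t K = 0" using infdist_nonneg[of t K] by (auto simp: h0_def max_def split: if_splits)
    then show "t \<in> K" using in_closure_iff_infdist_zero[OF Kne] cK by (simp add: closure_closed)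
  qed
  obtain x0 :: 'a where True by blast
  define \<psi>' where "\<psi>' t = (if t \<in> K then \<psi> t else x0)" for t
  have \<psi>'B: "\<psi>' \<in> borel_measurable borel" unfolding \<psi>'_def
    by (intro borel_measurable_continuous_on_if borel_closed cK K(3) continuous_on_const)
  have \<psi>'M: "\<psi>' \<in> measurable M borel" by (rule meas_borel[OF M.events_eq_borel \<psi>'B])
  define \<nu> where "\<nu> = distr M borel \<psi>'"
  have bpn: "borel_prob \<nu>" unfolding borel_prob_def \<nu>_def
    by (simp add: M.prob_space_distr[OF \<psi>'M])
  have lim: "(\<lambda>i. \<integral>x. g x \<partial>\<mu>s (r i)) \<longlonglongrightarrow> (\<integral>x. g x \<partial>\<nu>)" if gc: "continuous_on UNIV g" for g :: "'a \<Rightarrow> real"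
  proof -
    obtain B where B: "B \<ge> 0" "\<And>x. \<bar>g x\<bar> \<le> B" using bdd_cont[OF cpt gc] by blast
    have gpc: "continuous_on K (g \<circ> \<psi>)"
      by (rule continuous_on_compose[OF K(3)]) (rule continuous_on_subset[OF gc], simp)
    obtain h where h: "continuous_on UNIV h" "\<And>t. t \<in> K \<Longrightarrow> h t = (g \<circ> \<psi>) t" "\<And>t. t \<in> UNIV \<Longrightarrow> norm (h t) \<le> B"
      by (rule Tietze[OF gpc _ B(1), of UNIV]) (use cK B in auto)
    have "(\<lambda>i. \<integral>x. h (e x) \<partial>\<mu>s (r i)) \<longlonglongrightarrow> (\<integral>t. h t \<partial>M)" by (rule conv[OF h(1) h(3)]) simp
    moreover have "h (e x) = g x" for x using h(2)[of "e x"] K(2,4) by auto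
    moreover have "(\<integral>t. h t \<partial>M) = (\<integral>x. g x \<partial>\<nu>)"
    proof -
      have "(\<integral>x. g x \<partial>\<nu>) = (\<integral>t. g (\<psi>' t) \<partial>M)"
        unfolding \<nu>_def by (rule integral_distr[OF \<psi>'M borel_measurable_continuous_onI[OF gc]])
      also have "\<dots> = (\<integral>t. h t \<partial>M)"
      proof (rule integral_cong_AE)
        show "(\<lambda>t. g (\<psi>' t)) \<in> borel_measurable M"
          by (rule measurable_compose[OF \<psi>'M borel_measurable_continuous_onI[OF gc]])
        show "h \<in> borel_measurable M" using borel_measurable_continuous_onI[OF h(1)] by simp
        show "AE t in M. g (\<psi>' t) = h t"
          using aeK by (rule AE_mp) (use h(2) in \<open>auto simp: \<psi>'_def\<close>)
      qed
      finally show ?thesis by simp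
    qed
    ultimately show ?thesis by simp
  qed
  show ?thesis using bpn r lim by blast
qed


lemma closure_mem:
  assumes "\<nu> \<in> weak_star_closure \<mu>" shows "borel_prob \<nu>"
  using assms by (simp add: weak_star_closure_def)

lemma thin:
  fixes \<mu> :: "nat \<Rightarrow> 'a::metric_space measure" and B :: "'a set"
  assumes cpt: "compact (UNIV :: 'a set)"
    and bp: "\<And>n. borel_prob (\<mu> n)"
    and ac: "\<And>\<nu> \<nu>'. \<nu> \<in> weak_star_closure \<mu> \<Longrightarrow> \<nu>' \<in> weak_star_closure \<mu> \<Longrightarrow>
           absolutely_continuous \<nu> \<nu>'"
    and cB: "closed B" and Bne: "B \<noteq> {}"
    and z: "\<And>n. emeasure (\<mu> n) B = 0"
    and \<epsilon>: "\<epsilon> > 0"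
  shows "\<exists>t>0. \<forall>n. measure (\<mu> n) {x. infdist x B < t} \<le> \<epsilon>"
proof (rule ccontr)
  assume "\<not> ?thesis"
  then have nt: "\<And>t. t > 0 \<Longrightarrow> \<exists>n. measure (\<mu> n) {x. infdist x B < t} > \<epsilon>"
    by (auto simp: not_le)
  have "\<forall>j::nat. \<exists>n. measure (\<mu> n) {x. infdist x B < 1 / (real j + 1)} > \<epsilon>"
  proof
    fix j :: nat show "\<exists>n. measure (\<mu> n) {x. infdist x B < 1 / (real j + 1)} > \<epsilon>"
      by (rule nt) simp
  qed
  then obtain nn where nn: "\<And>j. measure (\<mu> (nn j)) {x. infdist x B < 1 / (real j + 1)} > \<epsilon>"
    by (metis (no_types))
  obtain \<nu> r where bpn: "borel_prob \<nu>" and r: "strict_mono r"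
    and lim: "\<And>g::'a \<Rightarrow> real. continuous_on UNIV g \<Longrightarrow> (\<lambda>i. \<integral>x. g x \<partial>\<mu> (nn (r i))) \<longlonglongrightarrow> (\<integral>x. g x \<partial>\<nu>)"
    using weak_limit[OF cpt, of "\<lambda>j. \<mu> (nn j)"] bp by blast
  interpret N: prob_space \<nu> using bpn by (simp add: borel_prob_def)
  have sN: "sets \<nu> = sets borel" using bpn by (simp add: borel_prob_def)
  have inN: "\<nu> \<in> weak_star_closure \<mu>"
    unfolding weak_star_closure_def
  proof (intro CollectI conjI allI impI bpn)
    fix G :: "('a \<Rightarrow> real) set" and \<delta> :: real
    assume G: "finite G \<and> (\<forall>g\<in>G. continuous_on UNIV g) \<and> \<delta> > 0"
    have "\<forall>g\<in>G. eventually (\<lambda>i. \<bar>(\<integral>x. g x \<partial>\<mu> (nn (r i))) - (\<integral>x. g x \<partial>\<nu>)\<bar> < \<delta>) sequentially"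
    proof
      fix g assume "g \<in> G"
      then have "(\<lambda>i. \<integral>x. g x \<partial>\<mu> (nn (r i))) \<longlonglongrightarrow> (\<integral>x. g x \<partial>\<nu>)" using G lim by blast
      then show "eventually (\<lambda>i. \<bar>(\<integral>x. g x \<partial>\<mu> (nn (r i))) - (\<integral>x. g x \<partial>\<nu>)\<bar> < \<delta>) sequentially"
        using G by (auto simp: tendsto_iff dist_real_def)
    qed
    then have "eventually (\<lambda>i. \<forall>g\<in>G. \<bar>(\<integral>x. g x \<partial>\<mu> (nn (r i))) - (\<integral>x. g x \<partial>\<nu>)\<bar> < \<delta>) sequentially"
      using G by (intro eventually_ball_finite) auto
    then obtain i where "\<forall>g\<in>G. \<bar>(\<integral>x. g x \<partial>\<mu> (nn (r i))) - (\<integral>x. g x \<partial>\<nu>)\<bar> < \<delta>"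
      by (auto simp: eventually_sequentially)
    then show "\<exists>n. \<forall>g\<in>G. \<bar>(\<integral>x. g x \<partial>\<mu> n) - (\<integral>x. g x \<partial>\<nu>)\<bar> < \<delta>" by blast
  qed
  have in0: "\<mu> 0 \<in> weak_star_closure \<mu>"
    unfolding weak_star_closure_def using bp[of 0] by (auto intro!: exI[of _ 0])
  have "B \<in> null_sets (\<mu> 0)"
    using z[of 0] bp[of 0] cB by (auto simp: borel_prob_def null_sets_def)
  then have "B \<in> null_sets \<nu>" using ac[OF in0 inN] by (auto simp: absolutely_continuous_def)
  then have nB: "measure \<nu> B = 0" by (simp add: measure_def null_setsD1)
  define A where "A m = {x. infdist x B \<le> 2 / (real m + 1)}" for m :: nat
  have cA: "closed (A m)" for m unfolding A_def by (intro closed_Collect_le continuous_intros)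
  have AS: "range A \<subseteq> sets \<nu>" using cA sN by auto
  have dA: "decseq A"
    unfolding decseq_def
  proof (intro allI impI)
    fix m n :: nat assume "m \<le> n"
    then have "2/(real n+1) \<le> 2/(real m+1)" by (intro divide_left_mono) auto
    then show "A n \<subseteq> A m" unfolding A_def by auto
  qed
  have IA: "(\<Inter>m. A m) = B"
  proof
    show "B \<subseteq> (\<Inter>m. A m)" by (auto simp: A_def infdist_zero)
    show "(\<Inter>m. A m) \<subseteq> B"
    proof
      fix x assume x: "x \<in> (\<Inter>m. A m)"
      have "infdist x B \<le> 0"
      proof (rule field_le_epsilon)
        fix e :: real assume "e > 0"
        obtain m :: nat where "1 / (real m + 1) < e / 2"
          using reals_Archimedean[of "e/2"] \<open>e > 0\<close>
          by (metis add.commute half_gt_zero inverse_eq_divide of_nat_Suc)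
        then have "2 / (real m + 1) < e" by (simp add: field_simps)
        moreover have "infdist x B \<le> 2 / (real m + 1)" using x by (auto simp: A_def)
        ultimately show "infdist x B \<le> 0 + e" by linarith
      qed
      then have "infdist x B = 0" using infdist_nonneg[of x B] by linarith
      then show "x \<in> B" using in_closure_iff_infdist_zero[OF Bne] cB by (simp add: closure_closed)
    qed
  qed
  have "(\<lambda>m. measure \<nu> (A m)) \<longlonglongrightarrow> 0"
    using N.finite_Lim_measure_decseq[OF AS dA] IA nB by simp
  then obtain m where m: "measure \<nu> (A m) < \<epsilon>"
    using \<epsilon> by (auto simp: tendsto_iff dist_real_def eventually_sequentially)
  define \<gamma> where "\<gamma> x = min 1 (max 0 (2 - (real m + 1) * infdist x B))" for x
  have \<gamma>c: "continuous_on UNIV \<gamma>" unfolding \<gamma>_def by (intro continuous_intros)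
  have \<gamma>b: "0 \<le> \<gamma> x \<and> \<gamma> x \<le> 1" for x unfolding \<gamma>_def by auto
  have \<gamma>B: "\<gamma> \<in> borel_measurable borel" by (rule borel_measurable_continuous_onI[OF \<gamma>c])
  have "(\<integral>x. \<gamma> x \<partial>\<nu>) \<le> (\<integral>x. indicator (A m) x \<partial>\<nu>)"
  proof (rule integral_mono)
    show "integrable \<nu> \<gamma>"
      by (rule N.integrable_const_bound[where B=1]) (use \<gamma>b \<gamma>B sN in auto)
    show "integrable \<nu> (indicator (A m) :: 'a \<Rightarrow> real)"
      by (rule N.integrable_const_bound[where B=1]) (use AS in auto)
    fix x show "\<gamma> x \<le> indicator (A m) x"
    proof (cases "x \<in> A m")
      case True then show ?thesis using \<gamma>b by simp
    next
      case False
      then have "2 / (real m + 1) < infdist x B" by (auto simp: A_def)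
      then have "2 < (real m + 1) * infdist x B" by (simp add: field_simps)
      then show ?thesis using False by (simp add: \<gamma>_def)
    qed
  qed
  also have "\<dots> = measure \<nu> (A m)" using sets_eq_imp_space_eq[OF sN] by simp
  finally have up: "(\<integral>x. \<gamma> x \<partial>\<nu>) < \<epsilon>" using m by simp
  have "\<epsilon> \<le> (\<integral>x. \<gamma> x \<partial>\<nu>)"
  proof (rule LIMSEQ_le_const[OF lim[OF \<gamma>c]], intro exI[of _ m] allI impI)
    fix i assume "m \<le> i"
    then have ri: "m \<le> r i" using seq_suble[OF r, of i] by linarith
    interpret P: prob_space "\<mu> (nn (r i))" using bp by (simp add: borel_prob_def)
    have sP: "sets (\<mu> (nn (r i))) = sets borel" using bp by (simp add: borel_prob_def)
    define U where "U = {x. infdist x B < 1 / (real (r i) + 1)}"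
    have oU: "open U" unfolding U_def by (intro open_Collect_less continuous_intros)
    have "\<epsilon> < measure (\<mu> (nn (r i))) U" using nn[of "r i"] by (simp add: U_def)
    also have "\<dots> = (\<integral>x. indicator U x \<partial>\<mu> (nn (r i)))" using oU sP by simp
    also have "\<dots> \<le> (\<integral>x. \<gamma> x \<partial>\<mu> (nn (r i)))"
    proof (rule integral_mono)
      show "integrable (\<mu> (nn (r i))) \<gamma>"
        by (rule P.integrable_const_bound[where B=1]) (use \<gamma>b \<gamma>B sP in auto)
      show "integrable (\<mu> (nn (r i))) (indicator U :: 'a \<Rightarrow> real)"
      proof (rule P.integrable_const_bound[where B=1])
        have "U \<in> sets (\<mu> (nn (r i)))" using oU sP by simp
        then show "(indicator U :: 'a \<Rightarrow> real) \<in> borel_measurable (\<mu> (nn (r i)))"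
          by (rule borel_measurable_indicator)
      qed simp
      fix x show "indicator U x \<le> \<gamma> x"
      proof (cases "x \<in> U")
        case False then show ?thesis using \<gamma>b by simp
      next
        case True
        then have "infdist x B < 1 / (real (r i) + 1)" by (simp add: U_def)
        also have "\<dots> \<le> 1 / (real m + 1)" using ri by (intro divide_left_mono) auto
        finally have "(real m + 1) * infdist x B < 1" by (simp add: field_simps)
        then show ?thesis using True by (simp add: \<gamma>_def)
      qed
    qed
    finally show "\<epsilon> \<le> (\<integral>x. \<gamma> x \<partial>\<mu> (nn (r i)))" by simp
  qed
  then show False using up by simp
qed


lemma sep_compact:
  fixes S T :: "'a::metric_space set"
  assumes "compact S" "compact T" "S \<inter> T = {}"
  shows "\<exists>d>0. \<forall>x\<in>S. \<forall>y\<in>T. d \<le> dist x y"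
proof (cases "S = {} \<or> T = {}")
  case True then show ?thesis by (intro exI[of _ 1]) auto
next
  case False
  then have Sne: "S \<noteq> {}" and Tne: "T \<noteq> {}" by auto
  have cT: "closed T" using assms(2) by (rule compact_imp_closed)
  have "continuous_on S (\<lambda>x. infdist x T)" by (intro continuous_intros)
  then obtain x0 where x0: "x0 \<in> S" "\<And>x. x \<in> S \<Longrightarrow> infdist x0 T \<le> infdist x T"
    using continuous_attains_inf[OF assms(1) Sne] by blast
  have "x0 \<notin> T" using x0(1) assms(3) by auto
  then have "infdist x0 T \<noteq> 0" using in_closure_iff_infdist_zero[OF Tne] cT by (simp add: closure_closed)
  then have pos: "infdist x0 T > 0" using infdist_nonneg[of x0 T] by linarith
  show ?thesis
  proof (intro exI[of _ "infdist x0 T"] conjI ballI pos)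
    fix x y assume "x \<in> S" "y \<in> T"
    then show "infdist x0 T \<le> dist x y" using x0(2)[of x] infdist_le[of y T x] by linarith
  qed
qed

theorem mainTheorem17:
  fixes f :: "nat \<Rightarrow> 'a::metric_space \<Rightarrow> 'a"
    and \<mu> :: "nat \<Rightarrow> 'a measure"
    and k :: nat and P :: "nat \<Rightarrow> 'a set"
  assumes "compact (UNIV :: 'a set)"
    and "\<And>n. continuous_on UNIV (f n)"
    and "equicontinuous_seq f"
    and "\<And>n. borel_prob (\<mu> n)"
    and "\<And>n. distr (\<mu> n) borel (f n) = \<mu> (Suc n)"
    and "\<And>\<nu> \<nu>'. \<nu> \<in> weak_star_closure \<mu> \<Longrightarrow> \<nu>' \<in> weak_star_closure \<mu> \<Longrightarrow>
           absolutely_continuous \<nu> \<nu>'"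
    and "borel_partition k P"
    and "\<And>n i. i < k \<Longrightarrow> emeasure (\<mu> n) (frontier (P i)) = 0"
  shows "((\<lambda>_. k), (\<lambda>_. P)) \<in> misiurewicz_class \<mu>"
proof -
  note cpt = assms(1) and bp = assms(4) and ac = assms(6) and bpart = assms(7) and fz = assms(8)
  have disj: "\<And>i j. i < k \<Longrightarrow> j < k \<Longrightarrow> i \<noteq> j \<Longrightarrow> P i \<inter> P j = {}"
    using bpart by (simp add: borel_partition_def)
  have main: "\<exists>\<delta>>0. \<exists>C. \<forall>i<k. compact (C i) \<and> C i \<subseteq> P i \<and>
        (\<forall>n. measure (\<mu> n) (P i - C i) \<le> \<epsilon>) \<and>
        (\<forall>j<k. i \<noteq> j \<longrightarrow> (\<forall>x\<in>C i. \<forall>y\<in>C j. dist x y \<ge> \<delta>))" if \<epsilon>: "\<epsilon> > 0" for \<epsilon>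
  proof -
    have "\<forall>i. \<exists>t>0. i < k \<and> frontier (P i) \<noteq> {} \<longrightarrow>
            (\<forall>n. measure (\<mu> n) {x. infdist x (frontier (P i)) < t} \<le> \<epsilon>)"
    proof
      fix i show "\<exists>t>0. i < k \<and> frontier (P i) \<noteq> {} \<longrightarrow>
            (\<forall>n. measure (\<mu> n) {x. infdist x (frontier (P i)) < t} \<le> \<epsilon>)"
      proof (cases "i < k \<and> frontier (P i) \<noteq> {}")
        case True
        have z: "\<And>n. emeasure (\<mu> n) (frontier (P i)) = 0" using fz True by blast
        obtain t where "t > 0" "\<forall>n. measure (\<mu> n) {x. infdist x (frontier (P i)) < t} \<le> \<epsilon>"
          using thin[where \<mu>=\<mu> and B="frontier (P i)", OF cpt bp ac frontier_closed _ z \<epsilon>] True by blast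
        then show ?thesis by blast
      next
        case False then show ?thesis by (intro exI[of _ 1]) auto
      qed
    qed
    then obtain T where T: "\<And>i. T i > 0"
      "\<And>i n. i < k \<Longrightarrow> frontier (P i) \<noteq> {} \<Longrightarrow> measure (\<mu> n) {x. infdist x (frontier (P i)) < T i} \<le> \<epsilon>"
      by metis
    define t where "t = Min (insert 1 (T ` {..<k}))"
    have tpos: "t > 0" unfolding t_def using T(1) by (subst Min_gr_iff) auto
    have tle: "t \<le> T i" if "i < k" for i unfolding t_def using that by (intro Min_le) auto
    define C where "C i = {x \<in> P i. frontier (P i) = {} \<or> t \<le> infdist x (frontier (P i))}" for i
    have closedC: "closed (C i)" for i
    proof (cases "frontier (P i) = {}")
      case True
      then have "closure (P i) \<subseteq> P i" using interior_subset[of "P i"] by (auto simp: frontier_def)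
      then have "closed (P i)" using closure_subset_eq by blast
      then show ?thesis using True by (simp add: C_def)
    next
      case False
      have "C i = closure (P i) \<inter> {x. t \<le> infdist x (frontier (P i))}"
      proof
        show "C i \<subseteq> closure (P i) \<inter> {x. t \<le> infdist x (frontier (P i))}"
          using False closure_subset by (auto simp: C_def)
        show "closure (P i) \<inter> {x. t \<le> infdist x (frontier (P i))} \<subseteq> C i"
        proof
          fix x assume x: "x \<in> closure (P i) \<inter> {x. t \<le> infdist x (frontier (P i))}"
          then have "x \<notin> frontier (P i)" using tpos infdist_zero[of x "frontier (P i)"] by auto
          then have "x \<in> interior (P i)" using x by (auto simp: frontier_def)
          then have "x \<in> P i" using interior_subset by blast
          then show "x \<in> C i" using x by (simp add: C_def)
        qed
      qed
      moreover have "closed {x. t \<le> infdist x (frontier (P i))}"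
        by (intro closed_Collect_le continuous_intros)
      ultimately show ?thesis by (simp add: closed_Int)
    qed
    have cC: "compact (C i)" for i
      using compact_Int_closed[OF cpt closedC[of i]] by simp
    have CP: "C i \<subseteq> P i" for i by (auto simp: C_def)
    have meas: "measure (\<mu> n) (P i - C i) \<le> \<epsilon>" if "i < k" for i n
    proof (cases "frontier (P i) = {}")
      case True
      then have "P i - C i = {}" by (auto simp: C_def)
      then have "measure (\<mu> n) (P i - C i) = 0" by (simp only: measure_empty)
      then show ?thesis using \<epsilon> by simp
    next
      case False
      interpret prob_space "\<mu> n" using bp by (simp add: borel_prob_def)
      have sM: "sets (\<mu> n) = sets borel" using bp by (simp add: borel_prob_def)
      have sub: "P i - C i \<subseteq> {x. infdist x (frontier (P i)) < T i}"
        using tle[OF that] False by (auto simp: C_def)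
      have op: "open {x. infdist x (frontier (P i)) < T i}"
        by (intro open_Collect_less continuous_intros)
      have "measure (\<mu> n) (P i - C i) \<le> measure (\<mu> n) {x. infdist x (frontier (P i)) < T i}"
        by (rule finite_measure_mono[OF sub]) (use op sM in simp)
      also have "\<dots> \<le> \<epsilon>" using T(2)[OF that False] by blast
      finally show ?thesis .
    qed
    have "\<forall>p. \<exists>d>0. fst p < k \<and> snd p < k \<and> fst p \<noteq> snd p \<longrightarrow>
            (\<forall>x\<in>C (fst p). \<forall>y\<in>C (snd p). d \<le> dist x y)"
    proof
      fix p :: "nat \<times> nat"
      show "\<exists>d>0. fst p < k \<and> snd p < k \<and> fst p \<noteq> snd p \<longrightarrow>
            (\<forall>x\<in>C (fst p). \<forall>y\<in>C (snd p). d \<le> dist x y)"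
      proof (cases "fst p < k \<and> snd p < k \<and> fst p \<noteq> snd p")
        case True
        then have "C (fst p) \<inter> C (snd p) = {}" using disj[of "fst p" "snd p"] CP by blast
        then show ?thesis using sep_compact[OF cC cC] by blast
      next
        case False then show ?thesis by (intro exI[of _ 1]) auto
      qed
    qed
    then obtain D where D: "\<And>p. D p > 0"
      "\<And>p. fst p < k \<Longrightarrow> snd p < k \<Longrightarrow> fst p \<noteq> snd p \<Longrightarrow> (\<forall>x\<in>C (fst p). \<forall>y\<in>C (snd p). D p \<le> dist x y)"
      by metis
    define \<delta> where "\<delta> = Min (insert 1 (D ` ({..<k} \<times> {..<k})))"
    have dpos: "\<delta> > 0" unfolding \<delta>_def using D(1) by (subst Min_gr_iff) auto
    have dle: "\<delta> \<le> D (i, j)" if "i < k" "j < k" for i j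
      unfolding \<delta>_def using that by (intro Min_le) auto
    show ?thesis
    proof (intro exI[of _ \<delta>] exI[of _ C] conjI dpos allI impI ballI)
      fix i j x y assume "i < k" "j < k" "i \<noteq> j" "x \<in> C i" "y \<in> C j"
      then show "\<delta> \<le> dist x y" using D(2)[of "(i, j)"] dle[of i j] by fastforce
    qed (use cC CP meas in auto)
  qed
  show ?thesis
    unfolding misiurewicz_class_def
  proof (intro CollectI, unfold case_prod_conv, intro conjI allI impI)
    show "\<And>n. borel_partition k P" by (rule bpart)
    show "bdd_above (range (\<lambda>_. k))" by simp
    fix \<epsilon> :: real assume "\<epsilon> > 0"
    from main[OF this] obtain \<delta> C where \<delta>: "\<delta> > 0" and
      C: "\<forall>i<k. compact (C i) \<and> C i \<subseteq> P i \<and> (\<forall>n. measure (\<mu> n) (P i - C i) \<le> \<epsilon>) \<and>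
        (\<forall>j<k. i \<noteq> j \<longrightarrow> (\<forall>x\<in>C i. \<forall>y\<in>C j. dist x y \<ge> \<delta>))" by blast
    show "\<exists>\<delta>>0. \<exists>C. \<forall>n. \<forall>i<k. compact (C n i) \<and> C n i \<subseteq> P i \<and>
        measure (\<mu> n) (P i - C n i) \<le> \<epsilon> \<and>
        (\<forall>j<k. i \<noteq> j \<longrightarrow> (\<forall>x\<in>C n i. \<forall>y\<in>C n j. dist x y \<ge> \<delta>))"
    proof (intro exI[of _ \<delta>] conjI \<delta>)
      show "\<exists>C'. \<forall>n. \<forall>i<k. compact (C' n i) \<and> C' n i \<subseteq> P i \<and>
        measure (\<mu> n) (P i - C' n i) \<le> \<epsilon> \<and>
        (\<forall>j<k. i \<noteq> j \<longrightarrow> (\<forall>x\<in>C' n i. \<forall>y\<in>C' n j. dist x y \<ge> \<delta>))"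
        by (rule exI[of _ "\<lambda>_. C"]) (use C in blast)
    qed
  qed
qed

end
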